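(* Let $G$ be a connected Lie group with identity $e$ and consider a discrete-time linear control system on $G$ with control range $U\subset\mathbb{R}^m$ a compact neighborhood of $0$. Then for all $k,k_1,k_2\in\mathbb{N}$ and $g\in G$: (1) $\mathcal{R}_k=\mathcal{R}_{\le k}$; (2) if $k_1\le k_2$ then $\mathcal{R}_{k_1}\subset\mathcal{R}_{k_2}$; (3) $\mathcal{R}_k(g)=\mathcal{R}_k\, f_0^k(g)$; (4) $\mathcal{R}_{k_1+k_2}=\mathcal{R}_{k_1}f_0^{k_1}(\mathcal{R}_{k_2})=\mathcal{R}_{k_2}f_0^{k_2}(\mathcal{R}_{k_1})$; (5) for every control $u$, $\varphi(k,\mathcal{R}(g),u)\subset\mathcal{R}(g)$; (6) $e\in\mathrm{int}\,\mathcal{R}$ if and only if $\mathcal{R}$ is open.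
   Context: A discrete-time linear control system on $G$ is given by $f:G\times U\to G$, $f_u:=f(\cdot,u)$, such that $f_0$ is an automorphism of $G$ and $f_u(g)=f_u(e)\cdot f_0(g)$ for all $g\in G,u\in U$. Controls are $u=(u_i)_{i\in\mathbb{N}_0}\in U^{\mathbb{N}_0}$, solutions $\varphi(0,g,u)=g$, $\varphi(k,g,u)=f_{u_{k-1}}\circ\cdots\circ f_{u_0}(g)$. $\mathcal{R}_k(g)=\{\varphi(k,g,u):u\in U^{\mathbb{N}_0}\}$, $\mathcal{R}(g)=\bigcup_{k\in\mathbb{N}}\mathcal{R}_k(g)$, $\mathcal{R}_k=\mathcal{R}_k(e)$, $\mathcal{R}=\mathcal{R}(e)$, $\mathcal{R}_{\le k}=\bigcup_{t\le k}\mathcal{R}_t$. For sets $A,B\subset G$, $AB=\{ab:a\in A,b\in B\}$. *)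

theory Defs
  imports "HOL-Analysis.Analysis"
begin

text \<open>The group G is modelled as a type of class topological_group_add (a not
necessarily commutative topological group); the group product g h is written g + h,
the identity e is 0.  Controls take values in U, a subset of real^'m.\<close>

definition setmul :: "'g::plus set \<Rightarrow> 'g set \<Rightarrow> 'g set" where
  "setmul A B = {a + b | a b. a \<in> A \<and> b \<in> B}"

definition group_automorphism :: "('g::topological_group_add \<Rightarrow> 'g) \<Rightarrow> bool" where
  "group_automorphism h \<longleftrightarrow> bij h \<and> (\<forall>a b. h (a + b) = h a + h b)
     \<and> continuous_on UNIV h \<and> continuous_on UNIV (inv h)"

definition linear_control_system ::
  "('g::topological_group_add \<Rightarrow> 'u::topological_space \<Rightarrow> 'g) \<Rightarrow> 'u set \<Rightarrow> 'u \<Rightarrow> bool" where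
  "linear_control_system f U u0 \<longleftrightarrow> u0 \<in> U \<and>
     group_automorphism (\<lambda>g. f g u0) \<and>
     (\<forall>u\<in>U. \<forall>g. f g u = f 0 u + f g u0) \<and>
     continuous_on (UNIV \<times> U) (\<lambda>(g, u). f g u)"

fun phi :: "('g \<Rightarrow> 'u \<Rightarrow> 'g) \<Rightarrow> nat \<Rightarrow> 'g \<Rightarrow> (nat \<Rightarrow> 'u) \<Rightarrow> 'g" where
  "phi f 0 g u = g"
| "phi f (Suc k) g u = f (phi f k g u) (u k)"

definition reach_k :: "('g \<Rightarrow> 'u \<Rightarrow> 'g) \<Rightarrow> 'u set \<Rightarrow> nat \<Rightarrow> 'g \<Rightarrow> 'g set" where
  "reach_k f U k g = {phi f k g u | u. \<forall>i. u i \<in> U}"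

definition reach :: "('g \<Rightarrow> 'u \<Rightarrow> 'g) \<Rightarrow> 'u set \<Rightarrow> 'g \<Rightarrow> 'g set" where
  "reach f U g = (\<Union>k\<in>{1..}. reach_k f U k g)"

definition reach_le :: "('g::zero \<Rightarrow> 'u \<Rightarrow> 'g) \<Rightarrow> 'u set \<Rightarrow> nat \<Rightarrow> 'g set" where
  "reach_le f U k = (\<Union>t\<in>{1..k}. reach_k f U t 0)"

end

theory Submission
  imports Defs
begin

lemma phi_add: "phi f (a + b) g u = phi f b (phi f a g u) (\<lambda>i. u (a + i))"
  by (induction b) auto

lemma phi_cong: "(\<forall>i<k. u i = v i) \<Longrightarrow> phi f k g u = phi f k g v"
  by (induction k) auto

lemma open_transl:
  fixes S :: "'g::topological_group_add set"
  assumes "open S" shows "open ((\<lambda>x. a + x) ` S)"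
proof -
  have "(\<lambda>x. a + x) ` S = (\<lambda>x. - a + x) -` S \<inter> UNIV"
  proof (intro equalityI subsetI)
    fix x assume "x \<in> (\<lambda>x. - a + x) -` S \<inter> UNIV"
    then have "- a + x \<in> S" by simp
    moreover have "x = a + (- a + x)" by (simp add: add.assoc[symmetric])
    ultimately show "x \<in> (\<lambda>x. a + x) ` S" by blast
  qed (auto simp: add.assoc[symmetric])
  moreover have "continuous_on UNIV (\<lambda>x::'g. - a + x)"
    by (intro continuous_on_add continuous_on_const continuous_on_id)
  moreover have "open ((\<lambda>x. - a + x) -` S \<inter> UNIV)"
    using calculation(2) assms continuous_on_open_vimage[of UNIV "\<lambda>x. - a + x"] by blast
  ultimately show ?thesis by simp
qed

lemma open_aut:
  fixes h :: "'g::topological_group_add \<Rightarrow> 'g"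
  assumes "group_automorphism h" "open S" shows "open (h ` S)"
proof -
  have b: "bij h" and c: "continuous_on UNIV (inv h)"
    using assms(1) unfolding group_automorphism_def by auto
  have "h ` S = inv h -` S \<inter> UNIV"
    using b by (simp add: bij_vimage_eq_inv_image bij_imp_bij_inv inv_inv_eq)
  moreover have "open (inv h -` S \<inter> UNIV)"
    using c assms(2) continuous_on_open_vimage[of UNIV "inv h"] by blast
  ultimately show ?thesis by simp
qed

theorem proposition2p12:
  fixes f :: "'g::{topological_group_add, t2_space, second_countable_topology}
                 \<Rightarrow> real^'m \<Rightarrow> 'g"
    and U :: "(real^'m) set"
  assumes G_connected: "connected (UNIV :: 'g set)"
    and G_locally_compact: "locally compact (UNIV :: 'g set)"
    and U_compact: "compact U"
    and U_nbhd: "0 \<in> interior U"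
    and sys: "linear_control_system f U 0"
  shows
    "(\<forall>k\<ge>1. reach_k f U k 0 = reach_le f U k)
   \<and> (\<forall>k1 k2. 1 \<le> k1 \<longrightarrow> k1 \<le> k2 \<longrightarrow> reach_k f U k1 0 \<subseteq> reach_k f U k2 0)
   \<and> (\<forall>k\<ge>1. \<forall>g. reach_k f U k g = setmul (reach_k f U k 0) {((\<lambda>x. f x 0) ^^ k) g})
   \<and> (\<forall>k1\<ge>1. \<forall>k2\<ge>1.
        reach_k f U (k1 + k2) 0
          = setmul (reach_k f U k1 0) (((\<lambda>x. f x 0) ^^ k1) ` reach_k f U k2 0)
      \<and> reach_k f U (k1 + k2) 0
          = setmul (reach_k f U k2 0) (((\<lambda>x. f x 0) ^^ k2) ` reach_k f U k1 0))
   \<and> (\<forall>k\<ge>1. \<forall>g. \<forall>u. (\<forall>i. u i \<in> U) \<longrightarrow>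
        (\<lambda>x. phi f k x u) ` reach f U g \<subseteq> reach f U g)
   \<and> ((0::'g) \<in> interior (reach f U 0) \<longleftrightarrow> open (reach f U 0))"
proof -
  define f0 where "f0 = (\<lambda>x. f x 0)"
  have aut: "group_automorphism f0" and Z: "0 \<in> U"
    using sys unfolding linear_control_system_def f0_def by blast+
  have dec: "\<And>u g. u \<in> U \<Longrightarrow> f g u = f 0 u + f0 g"
  proof -
    fix u g assume "u \<in> U"
    moreover have "\<forall>u\<in>U. \<forall>g. f g u = f 0 u + f g 0"
      using sys unfolding linear_control_system_def by blast
    ultimately show "f g u = f 0 u + f0 g" unfolding f0_def by blast
  qed
  have hom: "\<And>a b. f0 (a + b) = f0 a + f0 b"
    using aut unfolding group_automorphism_def by auto
  have f00: "f0 0 = 0"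
  proof -
    have "f0 0 + f0 0 = f0 0 + 0" using hom[of 0 0] by simp
    then show ?thesis by (rule add_left_imp_eq)
  qed
  have homk: "(f0 ^^ k) (a + b) = (f0 ^^ k) a + (f0 ^^ k) b" for k a b
    by (induction k) (auto simp: hom)
  have split: "phi f k g u = phi f k 0 u + (f0 ^^ k) g" if "\<forall>i. u i \<in> U" for k g u
  proof (induction k)
    case 0 then show ?case by simp
  next
    case (Suc k)
    have "phi f (Suc k) g u = f 0 (u k) + f0 (phi f k 0 u + (f0 ^^ k) g)"
      using Suc dec[of "u k" "phi f k g u"] that by simp
    also have "\<dots> = (f 0 (u k) + f0 (phi f k 0 u)) + (f0 ^^ Suc k) g"
      by (simp add: hom add.assoc)
    also have "\<dots> = phi f (Suc k) 0 u + (f0 ^^ Suc k) g"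
      using dec[of "u k" "phi f k 0 u"] that by simp
    finally show ?case .
  qed
  have zero_in: "0 \<in> reach_k f U k 0" for k
  proof -
    have "phi f k 0 (\<lambda>_. 0) = 0"
      by (induction k) (auto simp: f00[unfolded f0_def])
    then show ?thesis unfolding reach_k_def using Z by force
  qed
  have P3: "reach_k f U k g = setmul (reach_k f U k 0) {(f0 ^^ k) g}" for k g
    unfolding reach_k_def setmul_def
  proof (intro equalityI subsetI)
    fix x assume "x \<in> {phi f k g u |u. \<forall>i. u i \<in> U}"
    then obtain u where u: "\<forall>i. u i \<in> U" "x = phi f k g u" by blast
    then have "x = phi f k 0 u + (f0 ^^ k) g" using split[OF u(1), of k g] by (simp only:)
    then show "x \<in> {a + b |a b. a \<in> {phi f k 0 u |u. \<forall>i. u i \<in> U} \<and> b \<in> {(f0 ^^ k) g}}"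
      using u(1) by blast
  next
    fix x assume "x \<in> {a + b |a b. a \<in> {phi f k 0 u |u. \<forall>i. u i \<in> U} \<and> b \<in> {(f0 ^^ k) g}}"
    then obtain u where u: "\<forall>i. u i \<in> U" "x = phi f k 0 u + (f0 ^^ k) g" by blast
    then have "x = phi f k g u" using split[OF u(1), of k g] by (simp only:)
    then show "x \<in> {phi f k g u |u. \<forall>i. u i \<in> U}"
      using u(1) by blast
  qed
  have P4: "reach_k f U (a + b) 0 = setmul (reach_k f U b 0) ((f0 ^^ b) ` reach_k f U a 0)" for a b
  proof
    show "reach_k f U (a + b) 0 \<subseteq> setmul (reach_k f U b 0) ((f0 ^^ b) ` reach_k f U a 0)"
    proof
      fix x assume "x \<in> reach_k f U (a + b) 0"
      then obtain u where u: "\<forall>i. u i \<in> U" "x = phi f (a + b) 0 u"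
        unfolding reach_k_def by auto
      have "x = phi f b 0 (\<lambda>i. u (a + i)) + (f0 ^^ b) (phi f a 0 u)"
      proof -
        have "x = phi f b (phi f a 0 u) (\<lambda>i. u (a + i))" using u(2) phi_add by (simp only:)
        also have "\<dots> = phi f b 0 (\<lambda>i. u (a + i)) + (f0 ^^ b) (phi f a 0 u)"
          by (rule split) (simp add: u(1))
        finally show ?thesis .
      qed
      then show "x \<in> setmul (reach_k f U b 0) ((f0 ^^ b) ` reach_k f U a 0)"
        unfolding setmul_def reach_k_def using u(1) by blast
    qed
  next
    show "setmul (reach_k f U b 0) ((f0 ^^ b) ` reach_k f U a 0) \<subseteq> reach_k f U (a + b) 0"
    proof
      fix x assume "x \<in> setmul (reach_k f U b 0) ((f0 ^^ b) ` reach_k f U a 0)"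
      then obtain u v where u: "\<forall>i. u i \<in> U" and v: "\<forall>i. v i \<in> U"
        and x: "x = phi f b 0 v + (f0 ^^ b) (phi f a 0 u)"
        unfolding setmul_def reach_k_def by auto
      define w where "w = (\<lambda>i. if i < a then u i else v (i - a))"
      have w: "\<forall>i. w i \<in> U" using u v by (simp add: w_def)
      have e1: "phi f a 0 w = phi f a 0 u" by (rule phi_cong) (simp add: w_def)
      have e2: "(\<lambda>i. w (a + i)) = v" by (simp add: w_def)
      have "phi f (a + b) 0 w = x"
      proof -
        have "phi f (a + b) 0 w = phi f b (phi f a 0 u) v"
          using phi_add[of f a b 0 w] e1 e2 by simp
        also have "\<dots> = x" unfolding x by (rule split[OF v])
        finally show ?thesis .
      qed
      then show "x \<in> reach_k f U (a + b) 0" unfolding reach_k_def using w by blast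
    qed
  qed
  have mono: "t \<le> k \<Longrightarrow> reach_k f U t 0 \<subseteq> reach_k f U k 0" for t k
  proof -
    assume "t \<le> k"
    then obtain d where k: "k = d + t" by (metis le_add_diff_inverse2)
    have "(f0 ^^ t) 0 = 0" by (induction t) (auto simp: f00)
    then have z: "0 \<in> (f0 ^^ t) ` reach_k f U d 0" using zero_in by (metis image_eqI)
    show ?thesis
    proof
      fix x assume x: "x \<in> reach_k f U t 0"
      have "x = x + 0" by simp
      then have "x \<in> setmul (reach_k f U t 0) ((f0 ^^ t) ` reach_k f U d 0)"
        unfolding setmul_def using x z by blast
      then show "x \<in> reach_k f U k 0" unfolding k P4 .
    qed
  qed
  have P1: "reach_k f U k 0 = reach_le f U k" if "k \<ge> 1" for k
    unfolding reach_le_def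
  proof (rule equalityI)
    show "reach_k f U k 0 \<subseteq> (\<Union>t\<in>{1..k}. reach_k f U t 0)"
      using that by (intro UN_upper) simp
    show "(\<Union>t\<in>{1..k}. reach_k f U t 0) \<subseteq> reach_k f U k 0"
      by (intro UN_least mono) simp
  qed
  have P5: "(\<lambda>x. phi f k x u) ` reach f U g \<subseteq> reach f U g" if u: "\<forall>i. u i \<in> U" for k g u
  proof
    fix y assume "y \<in> (\<lambda>x. phi f k x u) ` reach f U g"
    then obtain x where x: "x \<in> reach f U g" "y = phi f k x u" by blast
    then obtain j where j: "j \<ge> 1" "x \<in> reach_k f U j g" "y = phi f k x u"
      unfolding reach_def by blast
    then obtain v where v: "\<forall>i. v i \<in> U" "x = phi f j g v" unfolding reach_k_def by auto
    define w where "w = (\<lambda>i. if i < j then v i else u (i - j))"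
    have w: "\<forall>i. w i \<in> U" using u v by (simp add: w_def)
    have "phi f j g w = phi f j g v" by (rule phi_cong) (simp add: w_def)
    moreover have "(\<lambda>i. w (j + i)) = u" by (simp add: w_def)
    ultimately have "phi f (j + k) g w = y" using phi_add[of f j k g w] j(3) v(2) by simp
    then have "y \<in> reach_k f U (j + k) g" unfolding reach_k_def using w by blast
    moreover have "j + k \<in> {1..}" using j(1) by simp
    ultimately show "y \<in> reach f U g" unfolding reach_def by (rule UN_I[rotated])
  qed
  have autk: "open ((f0 ^^ n) ` S)" if "open S" for S n
    using that
  proof (induction n arbitrary: S)
    case 0 then show ?case by simp
  next
    case (Suc n)
    have "(f0 ^^ Suc n) ` S = f0 ` ((f0 ^^ n) ` S)"
      by (simp only: funpow.simps(2) image_comp)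
    then show ?case using open_aut[OF aut Suc.IH[OF Suc.prems]] by (simp only:)
  qed
  have P6: "(0::'g) \<in> interior (reach f U 0) \<longleftrightarrow> open (reach f U 0)"
  proof
    assume "open (reach f U 0)"
    moreover have "0 \<in> reach f U 0" unfolding reach_def using zero_in[of 1] by force
    ultimately show "0 \<in> interior (reach f U 0)" by (simp add: interior_open)
  next
    assume int: "0 \<in> interior (reach f U 0)"
    have "x \<in> interior (reach f U 0)" if xR: "x \<in> reach f U 0" for x
    proof -
      obtain k where k: "k \<ge> 1" "x \<in> reach_k f U k 0" using xR unfolding reach_def by auto
      then obtain u where u: "\<forall>i. u i \<in> U" "x = phi f k 0 u" unfolding reach_k_def by auto
      let ?h = "\<lambda>y. phi f k y u"
      have h: "?h = (\<lambda>y. phi f k 0 u + y) \<circ> (f0 ^^ k)"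
      proof (rule ext)
        fix y show "phi f k y u = ((\<lambda>y. phi f k 0 u + y) \<circ> (f0 ^^ k)) y"
          using split[OF u(1), of k y] by simp
      qed
      have op: "open (?h ` interior (reach f U 0))"
        unfolding h image_comp[symmetric] by (intro open_transl autk open_interior)
      have "x \<in> ?h ` interior (reach f U 0)"
        using int u(2) by (metis image_eqI)
      moreover have "?h ` interior (reach f U 0) \<subseteq> reach f U 0"
        using P5[OF u(1), of k 0] interior_subset by blast
      ultimately show ?thesis using op interior_maximal by blast
    qed
    then have "interior (reach f U 0) = reach f U 0" using interior_subset by blast
    then show "open (reach f U 0)" by (metis open_interior)
  qed
  have P4': "reach_k f U (k1 + k2) 0
          = setmul (reach_k f U k1 0) (((\<lambda>x. f x 0) ^^ k1) ` reach_k f U k2 0)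
      \<and> reach_k f U (k1 + k2) 0
          = setmul (reach_k f U k2 0) (((\<lambda>x. f x 0) ^^ k2) ` reach_k f U k1 0)" for k1 k2
  proof
    show "reach_k f U (k1 + k2) 0
          = setmul (reach_k f U k1 0) (((\<lambda>x. f x 0) ^^ k1) ` reach_k f U k2 0)"
      using P4[of k2 k1] unfolding f0_def by (simp only: add.commute)
    show "reach_k f U (k1 + k2) 0
          = setmul (reach_k f U k2 0) (((\<lambda>x. f x 0) ^^ k2) ` reach_k f U k1 0)"
      using P4[of k1 k2] unfolding f0_def .
  qed
  show ?thesis
  proof (intro conjI)
    show "\<forall>k\<ge>1. reach_k f U k 0 = reach_le f U k" using P1 by blast
    show "\<forall>k1 k2. 1 \<le> k1 \<longrightarrow> k1 \<le> k2 \<longrightarrow> reach_k f U k1 0 \<subseteq> reach_k f U k2 0"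
      using mono by blast
    show "\<forall>k\<ge>1. \<forall>g. reach_k f U k g = setmul (reach_k f U k 0) {((\<lambda>x. f x 0) ^^ k) g}"
      using P3 unfolding f0_def by blast
    show "\<forall>k1\<ge>1. \<forall>k2\<ge>1.
        reach_k f U (k1 + k2) 0
          = setmul (reach_k f U k1 0) (((\<lambda>x. f x 0) ^^ k1) ` reach_k f U k2 0)
      \<and> reach_k f U (k1 + k2) 0
          = setmul (reach_k f U k2 0) (((\<lambda>x. f x 0) ^^ k2) ` reach_k f U k1 0)"
      using P4' by blast
    show "\<forall>k\<ge>1. \<forall>g. \<forall>u. (\<forall>i. u i \<in> U) \<longrightarrow>
        (\<lambda>x. phi f k x u) ` reach f U g \<subseteq> reach f U g" using P5 by blast
    show "(0::'g) \<in> interior (reach f U 0) \<longleftrightarrow> open (reach f U 0)" by (rule P6)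
  qed
qed

end
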